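(* Let $G$ and $H$ be finite simple graphs, let $U\subseteq V_G$, and let $k$ be an integer. Then $$\gamma^d_k(G(U)\sqcap H)\leq \gamma^d_{k}(G)\,n(H),$$ where $n(H)=|V_H|$ and $\infty\cdot n(H)=\infty$.
   Context: All graphs are finite and simple. For a graph $G=(V_G,E_G)$, $S\subseteq V_G$ and $v\in V_G$, let $N_S(v)=\{u\in S: uv\in E_G\}$ and $\bar S=V_G\setminus S$. A set $D\subseteq V_G$ is dominating if every vertex outside $D$ has a neighbor in $D$. For an integer $k$, a nonempty set $S\subseteq V_G$ is a global defensive $k$-alliance (GD$k$-A) in $G$ if $S$ is dominating and $|N_S(v)|\ge |N_{\bar S}(v)|+k$ for every $v\in S$. The number $\gamma^d_k(G)$ is the minimum cardinality of a GD$k$-A in $G$, and $\gamma^d_k(G)=\infty$ if $G$ has none. For $U\subseteq V_G$, the generalized hierarchical product $G(U)\sqcap H$ has vertex set $V_G\times V_H$, with $(g,h)$ and $(g',h')$ adjacent iff either $g=g'\in U$ and $hh'\in E_H$, or $gg'\in E_G$ and $h=h'$. *)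

theory Defs
  imports Main "HOL-Library.Extended_Nat"
begin

definition simple_graph :: "'a set \<Rightarrow> ('a \<times> 'a) set \<Rightarrow> bool" where
  "simple_graph V E \<longleftrightarrow> finite V \<and> V \<noteq> {} \<and> E \<subseteq> V \<times> V \<and> sym E \<and> irrefl E"

definition nbhd :: "('a \<times> 'a) set \<Rightarrow> 'a set \<Rightarrow> 'a \<Rightarrow> 'a set" where
  "nbhd E S v = {u \<in> S. (u, v) \<in> E}"

definition dominating :: "'a set \<Rightarrow> ('a \<times> 'a) set \<Rightarrow> 'a set \<Rightarrow> bool" where
  "dominating V E D \<longleftrightarrow> D \<subseteq> V \<and> (\<forall>v \<in> V - D. \<exists>u \<in> D. (v, u) \<in> E)"

definition gdka :: "'a set \<Rightarrow> ('a \<times> 'a) set \<Rightarrow> int \<Rightarrow> 'a set \<Rightarrow> bool" where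
  "gdka V E k S \<longleftrightarrow> S \<noteq> {} \<and> dominating V E S \<and>
     (\<forall>v \<in> S. int (card (nbhd E S v)) \<ge> int (card (nbhd E (V - S) v)) + k)"

text \<open>Global defensive k-alliance number; Inf of the empty set of enat is \<infinity>.\<close>
definition gamma_d :: "'a set \<Rightarrow> ('a \<times> 'a) set \<Rightarrow> int \<Rightarrow> enat" where
  "gamma_d V E k = Inf {enat (card S) | S. gdka V E k S}"

text \<open>Generalized hierarchical product G(U) \<sqinter> H: vertex set V_G \<times> V_H, edges below.\<close>
definition hprod_edges ::
  "'a set \<Rightarrow> ('a \<times> 'a) set \<Rightarrow> 'a set \<Rightarrow> 'b set \<Rightarrow> ('b \<times> 'b) set \<Rightarrow> (('a \<times> 'b) \<times> ('a \<times> 'b)) set" where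
  "hprod_edges VG EG U VH EH =
     {((g, h), (g', h')). g \<in> VG \<and> g' \<in> VG \<and> h \<in> VH \<and> h' \<in> VH \<and>
        ((g = g' \<and> g \<in> U \<and> (h, h') \<in> EH) \<or> ((g, g') \<in> EG \<and> h = h'))}"

end

theory Submission
  imports Defs
begin

lemma prod_gdka:
  assumes G: "simple_graph VG EG" and Hg: "simple_graph VH EH"
    and S: "gdka VG EG k S"
  shows "gdka (VG \<times> VH) (hprod_edges VG EG U VH EH) k (S \<times> VH)"
proof -
  let ?E = "hprod_edges VG EG U VH EH"
  have SV: "S \<subseteq> VG" and Sne: "S \<noteq> {}" using S unfolding gdka_def dominating_def by auto
  have VHne: "VH \<noteq> {}" and fVH: "finite VH" using Hg unfolding simple_graph_def by auto
  have fVG: "finite VG" and EGV: "EG \<subseteq> VG \<times> VG" using G unfolding simple_graph_def by auto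
  have dom: "dominating (VG \<times> VH) ?E (S \<times> VH)"
    unfolding dominating_def
  proof (intro conjI ballI)
    show "S \<times> VH \<subseteq> VG \<times> VH" using SV by auto
  next
    fix x assume x: "x \<in> VG \<times> VH - S \<times> VH"
    obtain g h where xe: "x = (g,h)" and g: "g \<in> VG - S" and h: "h \<in> VH" using x by auto
    obtain u where u: "u \<in> S" "(g,u) \<in> EG" using S g unfolding gdka_def dominating_def by blast
    have "((g,h),(u,h)) \<in> ?E" using u g h SV unfolding hprod_edges_def by auto
    then show "\<exists>y\<in>S \<times> VH. (x, y) \<in> ?E" using u h xe by auto
  qed
  have all: "int (card (nbhd ?E (S \<times> VH) v)) \<ge> int (card (nbhd ?E (VG \<times> VH - S \<times> VH) v)) + k"
    if v: "v \<in> S \<times> VH" for v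
  proof -
    obtain g h where ve: "v = (g,h)" and g: "g \<in> S" and h: "h \<in> VH" using v by auto
    have base: "int (card (nbhd EG S g)) \<ge> int (card (nbhd EG (VG - S) g)) + k"
      using S g unfolding gdka_def by auto
    have e1: "nbhd ?E (VG \<times> VH - S \<times> VH) v = (\<lambda>u. (u,h)) ` nbhd EG (VG - S) g"
      using g h SV EGV unfolding nbhd_def hprod_edges_def ve by auto
    have c1: "card (nbhd ?E (VG \<times> VH - S \<times> VH) v) = card (nbhd EG (VG - S) g)"
      unfolding e1 by (rule card_image) (auto simp: inj_on_def)
    have sub: "(\<lambda>u. (u,h)) ` nbhd EG S g \<subseteq> nbhd ?E (S \<times> VH) v"
      using g h SV EGV unfolding nbhd_def hprod_edges_def ve by auto
    have fin: "finite (nbhd ?E (S \<times> VH) v)"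
      by (rule finite_subset[of _ "S \<times> VH"]) (auto simp: nbhd_def intro: finite_subset[OF SV fVG] fVH)
    have "card ((\<lambda>u. (u,h)) ` nbhd EG S g) \<le> card (nbhd ?E (S \<times> VH) v)"
      by (rule card_mono[OF fin sub])
    moreover have "card ((\<lambda>u. (u,h)) ` nbhd EG S g) = card (nbhd EG S g)"
      by (rule card_image) (auto simp: inj_on_def)
    ultimately show ?thesis using base c1 by linarith
  qed
  show ?thesis unfolding gdka_def using Sne VHne dom all by auto
qed

theorem mainTheorem1:
  fixes VG :: "'a set" and EG :: "('a \<times> 'a) set" and U :: "'a set"
    and VH :: "'b set" and EH :: "('b \<times> 'b) set" and k :: int
  assumes "simple_graph VG EG" and "simple_graph VH EH" and "U \<subseteq> VG"
  shows "gamma_d (VG \<times> VH) (hprod_edges VG EG U VH EH) k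
           \<le> (if gamma_d VG EG k = \<infinity> then \<infinity> else gamma_d VG EG k * enat (card VH))"
proof (cases "gamma_d VG EG k = \<infinity>")
  case True then show ?thesis by simp
next
  case False
  let ?A = "{enat (card S) | S. gdka VG EG k S}"
  have ne: "?A \<noteq> {}" using False unfolding gamma_d_def by (metis Inf_empty top_enat_def)
  have "Inf ?A \<in> ?A" using ne unfolding Inf_enat_def by (auto intro: LeastI)
  then obtain S where S: "gdka VG EG k S" and gS: "gamma_d VG EG k = enat (card S)"
    unfolding gamma_d_def by auto
  have P: "gdka (VG \<times> VH) (hprod_edges VG EG U VH EH) k (S \<times> VH)"
    using prod_gdka[OF assms(1,2) S] .
  have "gamma_d (VG \<times> VH) (hprod_edges VG EG U VH EH) k \<le> enat (card (S \<times> VH))"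
    unfolding gamma_d_def using P by (auto intro!: Inf_lower)
  also have "\<dots> = gamma_d VG EG k * enat (card VH)"
    using gS by (simp add: card_cartesian_product)
  finally show ?thesis using False by simp
qed

end
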